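(* Let $d\ge1$, $p\in\mathcal H(n,d)$, let $P$ be the induced homogeneous polynomial, write $P=S\cdot Q$, and let $K$ be the support of the Newton diagram of $Q$. Then $K$ is connected, contains $(0,\dots,0)$, and has size $d$.
   Context: $s(x)=x_1+\dots+x_n$. $\mathcal H(n,d)$ is the set of $p\in\mathbb R[x_1,\dots,x_n]$ of degree $d$ with all coefficients nonnegative and $p(x)=1$ whenever $s(x)=1$. Writing $p=\sum_{k=0}^dp_k$ with $p_k$ homogeneous of degree $k$, the induced homogeneous polynomial is $P(X_0,\dots,X_n)=\sum_{k=0}^dp_k(X_1,\dots,X_n)(-X_0)^{d-k}-(-X_0)^d$; it vanishes where $S(X)=X_0+X_1+\dots+X_n=0$, so $P=SQ$ with $Q$ homogeneous. The Newton diagram of $Q$ (with $\deg P=d$) is the function $D\colon\mathbb Z^n\to\{0,P,N\}$ assigning to $m$ the value $P$, $0$, or $N$ according as the coefficient of $X_0^{d-1-|m|}X_1^{m_1}\cdots X_n^{m_n}$ in $Q$ is positive, zero (including when some exponent is negative), or negative, where $|m|=m_1+\dots+m_n$; its support is $K=D^{-1}(\{P,N\})$. With $e_1,\dots,e_n$ the standard basis, two distinct points $m,m'$ are adjacent if $m-m'\in\{\pm e_j\}\cup\{e_j-e_k:j\ne k\}$; $K$ is connected if any two points of $K$ are joined by a path of successively adjacent points of $K$. The size of $K$ is $k-|a|+1$ where $k=\max_{m\in K}|m|$ and $a_j=\min_{m\in K}m_j$. *)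

theory Defs
  imports Complex_Main
begin

text \<open>Polynomials in n variables are coefficient functions on exponent vectors
  m :: nat \<Rightarrow> nat (variable x_{i+1} has exponent m i, i < n), finitely supported,
  and with m i = 0 for i \<ge> n on the support.\<close>

definition deg :: "nat \<Rightarrow> (nat \<Rightarrow> nat) \<Rightarrow> nat" where
  "deg n m = (\<Sum>i<n. m i)"

definition supp :: "((nat \<Rightarrow> nat) \<Rightarrow> real) \<Rightarrow> (nat \<Rightarrow> nat) set" where
  "supp c = {m. c m \<noteq> 0}"

definition is_poly :: "nat \<Rightarrow> ((nat \<Rightarrow> nat) \<Rightarrow> real) \<Rightarrow> bool" where
  "is_poly n c \<longleftrightarrow> finite (supp c) \<and> (\<forall>m\<in>supp c. \<forall>i\<ge>n. m i = 0)"

definition eval :: "nat \<Rightarrow> ((nat \<Rightarrow> nat) \<Rightarrow> real) \<Rightarrow> (nat \<Rightarrow> real) \<Rightarrow> real" where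
  "eval n c x = (\<Sum>m\<in>supp c. c m * (\<Prod>i<n. x i ^ m i))"

definition total_degree :: "nat \<Rightarrow> ((nat \<Rightarrow> nat) \<Rightarrow> real) \<Rightarrow> nat" where
  "total_degree n c = Max (deg n ` supp c)"

text \<open>The class H(n,d); the point x = (x_1,...,x_n) is (x 0, ..., x (n-1)).\<close>
definition H :: "nat \<Rightarrow> nat \<Rightarrow> ((nat \<Rightarrow> nat) \<Rightarrow> real) \<Rightarrow> bool" where
  "H n d c \<longleftrightarrow> is_poly n c \<and> supp c \<noteq> {} \<and> total_degree n c = d
     \<and> (\<forall>m. c m \<ge> 0)
     \<and> (\<forall>x::nat \<Rightarrow> real. (\<Sum>i<n. x i) = 1 \<longrightarrow> eval n c x = 1)"

text \<open>Induced homogeneous polynomial P(X_0,...,X_n), with X_i = X i: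
  P = sum_k p_k(X_1..X_n) (-X_0)^(d-k) - (-X_0)^d.\<close>
definition induced :: "nat \<Rightarrow> nat \<Rightarrow> ((nat \<Rightarrow> nat) \<Rightarrow> real) \<Rightarrow> (nat \<Rightarrow> real) \<Rightarrow> real" where
  "induced n d c X =
     (\<Sum>m\<in>supp c. c m * (\<Prod>i<n. X (Suc i) ^ m i) * (- X 0) ^ (d - deg n m)) - (- X 0) ^ d"

definition S :: "nat \<Rightarrow> (nat \<Rightarrow> real) \<Rightarrow> real" where
  "S n X = (\<Sum>i<Suc n. X i)"

definition is_quotient :: "nat \<Rightarrow> nat \<Rightarrow> ((nat \<Rightarrow> nat) \<Rightarrow> real) \<Rightarrow> ((nat \<Rightarrow> nat) \<Rightarrow> real) \<Rightarrow> bool" where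
  "is_quotient n d c q \<longleftrightarrow> is_poly (Suc n) q
     \<and> (\<forall>X. induced n d c X = S n X * eval (Suc n) q X)"

text \<open>Integer points of Z^n: m :: nat \<Rightarrow> int with m i = 0 for i \<ge> n.\<close>
definition Zn :: "nat \<Rightarrow> (nat \<Rightarrow> int) set" where
  "Zn n = {m. \<forall>i\<ge>n. m i = 0}"

definition absZ :: "nat \<Rightarrow> (nat \<Rightarrow> int) \<Rightarrow> int" where
  "absZ n m = (\<Sum>i<n. m i)"

text \<open>Coefficient of X_0^(d-1-|m|) X_1^(m_1) ... X_n^(m_n) in Q (zero if an exponent is negative).\<close>
definition newton_coeff :: "nat \<Rightarrow> nat \<Rightarrow> ((nat \<Rightarrow> nat) \<Rightarrow> real) \<Rightarrow> (nat \<Rightarrow> int) \<Rightarrow> real" where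
  "newton_coeff n d q m =
     (if (\<forall>i<n. m i \<ge> 0) \<and> int d - 1 - absZ n m \<ge> 0
      then q (\<lambda>j. if j = 0 then nat (int d - 1 - absZ n m)
                  else if j \<le> n then nat (m (j - 1)) else 0)
      else 0)"

datatype sign = Zero | Pos | Neg

definition newton_diagram :: "nat \<Rightarrow> nat \<Rightarrow> ((nat \<Rightarrow> nat) \<Rightarrow> real) \<Rightarrow> (nat \<Rightarrow> int) \<Rightarrow> sign" where
  "newton_diagram n d q m =
     (if newton_coeff n d q m > 0 then Pos else if newton_coeff n d q m < 0 then Neg else Zero)"

definition newton_support :: "nat \<Rightarrow> nat \<Rightarrow> ((nat \<Rightarrow> nat) \<Rightarrow> real) \<Rightarrow> (nat \<Rightarrow> int) set" where
  "newton_support n d q = {m \<in> Zn n. newton_diagram n d q m \<in> {Pos, Neg}}"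

definition adjacent :: "nat \<Rightarrow> (nat \<Rightarrow> int) \<Rightarrow> (nat \<Rightarrow> int) \<Rightarrow> bool" where
  "adjacent n m m' \<longleftrightarrow> m \<noteq> m' \<and>
     ((\<exists>j<n. (\<forall>i. m i - m' i = (if i = j then 1 else 0))
            \<or> (\<forall>i. m i - m' i = (if i = j then -1 else 0)))
      \<or> (\<exists>j<n. \<exists>k<n. j \<noteq> k \<and>
            (\<forall>i. m i - m' i = (if i = j then 1 else 0) - (if i = k then 1 else 0))))"

definition lattice_connected :: "nat \<Rightarrow> (nat \<Rightarrow> int) set \<Rightarrow> bool" where
  "lattice_connected n K \<longleftrightarrow>
     (\<forall>a\<in>K. \<forall>b\<in>K. (\<lambda>x y. x \<in> K \<and> y \<in> K \<and> adjacent n x y)\<^sup>*\<^sup>* a b)"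

definition lattice_size :: "nat \<Rightarrow> (nat \<Rightarrow> int) set \<Rightarrow> int" where
  "lattice_size n K = Max (absZ n ` K) - (\<Sum>j<n. Min ((\<lambda>m. m j) ` K)) + 1"

end

theory Submission
  imports Defs "HOL-Computational_Algebra.Polynomial"
begin


definition mon :: "nat \<Rightarrow> (nat \<Rightarrow> nat) \<Rightarrow> (nat \<Rightarrow> real) \<Rightarrow> real" where
  "mon N M X = (\<Prod>i<N. X i ^ M i)"

lemma eval_superset:
  assumes "finite A" "supp c \<subseteq> A"
  shows "eval N c X = (\<Sum>M\<in>A. c M * mon N M X)"
  unfolding eval_def mon_def
  by (rule sum.mono_neutral_left) (use assms in \<open>auto simp: supp_def\<close>)

lemma digits_inj:
  fixes B :: nat
  shows "(\<forall>i<N. M i < B) \<Longrightarrow> (\<forall>i<N. M' i < B) \<Longrightarrow>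
     (\<Sum>i<N. M i * B^i) = (\<Sum>i<N. M' i * B^i) \<Longrightarrow> i < N \<Longrightarrow> M i = M' i"
proof (induction N arbitrary: M M' i)
  case 0
  then show ?case by simp
next
  case (Suc N)
  have e: "(\<Sum>i<Suc N. f i * B^i) = f 0 + B * (\<Sum>i<N. f (Suc i) * B^i)" for f :: "nat \<Rightarrow> nat"
    unfolding sum.lessThan_Suc_shift by (simp add: sum_distrib_left mult_ac)
  from Suc.prems(3) have eq: "M 0 + B * (\<Sum>i<N. M (Suc i) * B^i) = M' 0 + B * (\<Sum>i<N. M' (Suc i) * B^i)"
    by (simp only: e)
  have b0: "M 0 < B" "M' 0 < B" using Suc.prems by auto
  have m0: "M 0 = M' 0"
  proof -
    have "(M 0 + B * (\<Sum>i<N. M (Suc i) * B^i)) mod B = M 0" using b0 by simp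
    moreover have "(M' 0 + B * (\<Sum>i<N. M' (Suc i) * B^i)) mod B = M' 0" using b0 by simp
    ultimately show ?thesis using eq by simp
  qed
  have rest: "(\<Sum>i<N. M (Suc i) * B^i) = (\<Sum>i<N. M' (Suc i) * B^i)"
    using eq m0 b0 by simp
  show ?case
  proof (cases i)
    case 0 then show ?thesis using m0 by simp
  next
    case (Suc j)
    have "(\<lambda>i. M (Suc i)) j = (\<lambda>i. M' (Suc i)) j"
      by (rule Suc.IH) (use Suc.prems rest Suc in auto)
    then show ?thesis using Suc by simp
  qed
qed

lemma IDT:
  assumes ip: "is_poly N c" and z: "\<And>X. eval N c X = 0"
  shows "c M = 0"
proof (cases "M \<in> supp c")
  case False then show ?thesis by (simp add: supp_def)
next
  case True
  have fin: "finite (supp c)" using ip by (simp add: is_poly_def)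
  define B where "B = Suc (\<Sum>M\<in>supp c. \<Sum>i<N. M i)"
  define Kr where "Kr M = (\<Sum>i<N. M i * B^i)" for M :: "nat \<Rightarrow> nat"
  have lt: "M' i < B" if "M' \<in> supp c" "i < N" for M' i
  proof -
    have "M' i \<le> (\<Sum>i<N. M' i)" using that by (intro member_le_sum) auto
    also have "\<dots> \<le> (\<Sum>M\<in>supp c. \<Sum>i<N. M i)" using that fin
      by (intro member_le_sum[where f="\<lambda>M. \<Sum>i<N. M i"]) auto
    finally show ?thesis unfolding B_def by simp
  qed
  define pp where "pp = (\<Sum>M'\<in>supp c. monom (c M') (Kr M'))"
  have "poly pp t = 0" for t
  proof -
    have "poly pp t = (\<Sum>M'\<in>supp c. c M' * t ^ Kr M')"
      by (simp add: pp_def poly_sum poly_monom)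
    also have "\<dots> = eval N c (\<lambda>i. t ^ (B^i))"
      unfolding eval_def Kr_def
      by (intro sum.cong refl) (simp add: power_sum power_mult[symmetric] mult.commute)
    finally show ?thesis using z by simp
  qed
  then have "pp = 0" using poly_all_0_iff_0 by blast
  then have "coeff pp (Kr M) = 0" by simp
  moreover have "coeff pp (Kr M) = (\<Sum>M'\<in>supp c. if M' = M then c M' else 0)"
  proof -
    have "coeff pp (Kr M) = (\<Sum>M'\<in>supp c. if Kr M' = Kr M then c M' else 0)"
      by (simp add: pp_def coeff_sum coeff_monom)
    also have "\<dots> = (\<Sum>M'\<in>supp c. if M' = M then c M' else 0)"
    proof (intro sum.cong refl)
      fix M' assume M': "M' \<in> supp c"
      have "Kr M' = Kr M \<longleftrightarrow> M' = M"
      proof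
        assume h: "Kr M' = Kr M"
        show "M' = M"
        proof
          fix i show "M' i = M i"
          proof (cases "i < N")
            case True
            show ?thesis
              by (rule digits_inj[of N M' B M]) (use h True lt M' \<open>M \<in> supp c\<close> in \<open>auto simp: Kr_def\<close>)
          next
            case False
            then have "N \<le> i" by simp
            then show ?thesis using ip M' \<open>M \<in> supp c\<close> unfolding is_poly_def by metis
          qed
        qed
      qed simp
      then show "(if Kr M' = Kr M then c M' else 0) = (if M' = M then c M' else 0)" by simp
    qed
    finally show ?thesis .
  qed
  ultimately show ?thesis using True fin by simp
qed



definition sh :: "nat \<Rightarrow> ((nat \<Rightarrow> nat) \<Rightarrow> real) \<Rightarrow> (nat \<Rightarrow> nat) \<Rightarrow> real" where
  "sh a c M = (if 1 \<le> M a then c (M(a := M a - 1)) else 0)"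

definition Smul :: "nat \<Rightarrow> ((nat \<Rightarrow> nat) \<Rightarrow> real) \<Rightarrow> (nat \<Rightarrow> nat) \<Rightarrow> real" where
  "Smul N c M = (\<Sum>a<N. sh a c M)"

lemma mon_up:
  assumes "a < N"
  shows "mon N (M(a := M a + 1)) X = X a * mon N M X"
proof -
  have "mon N (M(a := M a + 1)) X = (\<Prod>i<N. (if i = a then X a else 1) * X i ^ M i)"
    unfolding mon_def by (intro prod.cong refl) auto
  also have "\<dots> = X a * mon N M X"
    unfolding mon_def prod.distrib using assms by (simp add: prod.delta)
  finally show ?thesis .
qed

lemma supp_sh: "supp (sh a c) \<subseteq> (\<lambda>M. M(a := M a + 1)) ` supp c"
proof
  fix M assume "M \<in> supp (sh a c)"
  then have h: "1 \<le> M a" "c (M(a := M a - 1)) \<noteq> 0" by (auto simp: supp_def sh_def split: if_splits)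
  then have "M = (M(a := M a - 1))(a := (M(a := M a - 1)) a + 1)" by auto
  then show "M \<in> (\<lambda>M. M(a := M a + 1)) ` supp c" using h(2) unfolding supp_def
    by (metis (mono_tags, lifting) image_eqI mem_Collect_eq)
qed

lemma finite_supp_sh: "finite (supp c) \<Longrightarrow> finite (supp (sh a c))"
  using supp_sh finite_subset by blast

lemma inj_up: "inj (\<lambda>M::nat\<Rightarrow>nat. M((a::nat) := (M a + 1::nat)))"
proof (rule injI)
  fix M M' :: "nat \<Rightarrow> nat" assume h: "M(a := M a + 1) = M'(a := M' a + 1)"
  show "M = M'"
  proof
    fix i show "M i = M' i" using fun_cong[OF h, of i] by (cases "i = a") auto
  qed
qed

lemma eval_sh:
  assumes "finite (supp c)" "a < N"
  shows "eval N (sh a c) X = X a * eval N c X"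
proof -
  let ?u = "\<lambda>M. M(a := (M a + 1::nat))"
  have "eval N (sh a c) X = (\<Sum>M\<in>?u ` supp c. sh a c M * mon N M X)"
    by (rule eval_superset) (use assms supp_sh in auto)
  also have "\<dots> = (\<Sum>M\<in>supp c. sh a c (?u M) * mon N (?u M) X)"
    by (subst sum.reindex) (use inj_up[of a] in \<open>auto intro: inj_on_subset\<close>)
  also have "\<dots> = (\<Sum>M\<in>supp c. X a * (c M * mon N M X))"
  proof (intro sum.cong refl)
    fix M
    have "(?u M)(a := ?u M a - 1) = M" by auto
    then show "sh a c (?u M) * mon N (?u M) X = X a * (c M * mon N M X)"
      using mon_up[OF assms(2)] by (simp add: sh_def)
  qed
  also have "\<dots> = X a * eval N c X"
    by (simp add: eval_superset[OF assms(1) subset_refl] sum_distrib_left)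
  finally show ?thesis .
qed

lemma supp_Smul: "supp (Smul N c) \<subseteq> (\<Union>a<N. supp (sh a c))"
  unfolding supp_def Smul_def by (auto intro: ccontr)

lemma finite_supp_Smul: "finite (supp c) \<Longrightarrow> finite (supp (Smul N c))"
  by (rule finite_subset[OF supp_Smul]) (auto intro: finite_supp_sh)

lemma eval_Smul:
  assumes "finite (supp c)"
  shows "eval N (Smul N c) X = (\<Sum>a<N. X a) * eval N c X"
proof -
  let ?A = "\<Union>a<N. supp (sh a c)"
  have fA: "finite ?A" using assms by (auto intro: finite_supp_sh)
  have "eval N (Smul N c) X = (\<Sum>M\<in>?A. (\<Sum>a<N. sh a c M) * mon N M X)"
    unfolding Smul_def[symmetric] by (rule eval_superset[OF fA supp_Smul])
  also have "\<dots> = (\<Sum>a<N. \<Sum>M\<in>?A. sh a c M * mon N M X)"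
    by (simp add: sum_distrib_right sum.swap[where A="?A"])
  also have "\<dots> = (\<Sum>a<N. X a * eval N c X)"
  proof (intro sum.cong refl)
    fix a assume "a \<in> {..<N}"
    then have "eval N (sh a c) X = (\<Sum>M\<in>?A. sh a c M * mon N M X)"
      by (intro eval_superset[OF fA]) auto
    then show "(\<Sum>M\<in>?A. sh a c M * mon N M X) = X a * eval N c X"
      using eval_sh[OF assms] \<open>a \<in> {..<N}\<close> by simp
  qed
  also have "\<dots> = (\<Sum>a<N. X a) * eval N c X" by (simp add: sum_distrib_right)
  finally show ?thesis .
qed

lemma eval_diff:
  assumes "finite (supp c)" "finite (supp e)"
  shows "eval N (\<lambda>M. c M - e M) X = eval N c X - eval N e X"
proof -
  let ?A = "supp c \<union> supp e"
  have f: "finite ?A" using assms by auto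
  have "eval N (\<lambda>M. c M - e M) X = (\<Sum>M\<in>?A. (c M - e M) * mon N M X)"
    by (rule eval_superset[OF f]) (auto simp: supp_def)
  also have "\<dots> = (\<Sum>M\<in>?A. c M * mon N M X) - (\<Sum>M\<in>?A. e M * mon N M X)"
    by (simp add: left_diff_distrib sum_subtractf)
  also have "\<dots> = eval N c X - eval N e X"
    by (simp add: eval_superset[OF f])
  finally show ?thesis .
qed



definition tlv :: "nat \<Rightarrow> (nat \<Rightarrow> nat) \<Rightarrow> (nat \<Rightarrow> nat)" where
  "tlv n M = (\<lambda>i. if i < n then M (Suc i) else 0)"
definition Ev :: "nat \<Rightarrow> nat \<Rightarrow> (nat \<Rightarrow> nat) \<Rightarrow> (nat \<Rightarrow> nat)" where
  "Ev n d m = (\<lambda>i. if i = 0 then d - deg n m else m (i - 1))"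
definition e0 :: "nat \<Rightarrow> (nat \<Rightarrow> nat)" where
  "e0 d = (\<lambda>i. if i = 0 then d else 0)"
definition Pp :: "nat \<Rightarrow> nat \<Rightarrow> ((nat \<Rightarrow> nat) \<Rightarrow> real) \<Rightarrow> (nat \<Rightarrow> nat) \<Rightarrow> real" where
  "Pp n d p M = (if M \<in> Ev n d ` supp p then p (tlv n M) * (-1) ^ (M 0) else 0)"
definition Pd :: "nat \<Rightarrow> (nat \<Rightarrow> nat) \<Rightarrow> real" where
  "Pd d M = (if M = e0 d then (-1) ^ d else 0)"
definition Pc :: "nat \<Rightarrow> nat \<Rightarrow> ((nat \<Rightarrow> nat) \<Rightarrow> real) \<Rightarrow> (nat \<Rightarrow> nat) \<Rightarrow> real" where
  "Pc n d p M = Pp n d p M - Pd d M"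

locale hyp =
  fixes n d :: nat and p :: "(nat \<Rightarrow> nat) \<Rightarrow> real"
  assumes d1: "d \<ge> 1" and Hp: "H n d p"
begin

lemma fin_p: "finite (supp p)" using Hp by (simp add: H_def is_poly_def)
lemma supp_p_zero: "m \<in> supp p \<Longrightarrow> i \<ge> n \<Longrightarrow> m i = 0" using Hp by (simp add: H_def is_poly_def)
lemma p_nonneg: "p m \<ge> 0" using Hp by (simp add: H_def)
lemma deg_le: "m \<in> supp p \<Longrightarrow> deg n m \<le> d"
proof -
  assume m: "m \<in> supp p"
  have "deg n m \<le> Max (deg n ` supp p)" using m fin_p by (intro Max_ge) auto
  then show ?thesis using Hp by (simp add: H_def total_degree_def)
qed
lemma deg_top: "\<exists>m\<in>supp p. deg n m = d"
proof -
  have "Max (deg n ` supp p) \<in> deg n ` supp p"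
    using Hp fin_p by (intro Max_in) (auto simp: H_def)
  then show ?thesis using Hp unfolding H_def total_degree_def by auto
qed

lemma n_pos: "n \<ge> 1"
proof (rule ccontr)
  assume "\<not> n \<ge> 1"
  then have "n = 0" by simp
  obtain m where "m \<in> supp p" "deg n m = d" using deg_top by blast
  then show False using \<open>n = 0\<close> d1 by (simp add: deg_def)
qed

lemma p_ones: "\<And>x. (\<Sum>i<n. x i) = 1 \<Longrightarrow> eval n p x = 1" using Hp by (simp add: H_def)

lemma p0_ne1: "p (\<lambda>_. 0) \<noteq> 1"
proof
  assume h: "p (\<lambda>_. 0) = 1"
  define x :: "nat \<Rightarrow> real" where "x = (\<lambda>_. 1 / real n)"
  have "(\<Sum>i<n. x i) = 1" using n_pos by (simp add: x_def)
  then have ev: "eval n p x = 1" by (rule p_ones)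
  have z: "(\<lambda>_. 0) \<in> supp p" using h by (simp add: supp_def)
  have t: "p m * mon n m x = p m * (1 / real n) ^ deg n m" for m
    by (simp add: mon_def x_def deg_def power_sum)
  have "eval n p x = p (\<lambda>_. 0) + (\<Sum>m\<in>supp p - {\<lambda>_. 0}. p m * mon n m x)"
    unfolding eval_superset[OF fin_p subset_refl] using fin_p z
    by (simp add: sum.remove mon_def)
  then have s0: "(\<Sum>m\<in>supp p - {\<lambda>_. 0}. p m * (1 / real n) ^ deg n m) = 0"
    using ev h by (simp add: t)
  have "\<forall>m\<in>supp p - {\<lambda>_. 0}. p m * (1 / real n) ^ deg n m = 0"
    using s0 fin_p by (subst sum_nonneg_eq_0_iff[symmetric]) (auto intro: mult_nonneg_nonneg p_nonneg)
  then have "supp p \<subseteq> {\<lambda>_. 0}" using n_pos by (auto simp: supp_def)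
  then have "supp p = {\<lambda>_. 0}" using z by auto
  then show False using Hp d1 by (simp add: H_def total_degree_def deg_def)
qed

lemma Ev_inj: "inj (Ev n d)"
proof (rule injI)
  fix m m' assume h: "Ev n d m = Ev n d m'"
  show "m = m'"
  proof
    fix i show "m i = m' i" using fun_cong[OF h, of "Suc i"] by (simp add: Ev_def)
  qed
qed

lemma tlv_Ev: "m \<in> supp p \<Longrightarrow> tlv n (Ev n d m) = m"
  by (auto simp: tlv_def Ev_def supp_p_zero)

lemma mon_Ev: "mon (Suc n) (Ev n d m) X = X 0 ^ (d - deg n m) * (\<Prod>i<n. X (Suc i) ^ m i)"
  unfolding mon_def prod.lessThan_Suc_shift by (simp add: Ev_def)

lemma supp_Pp: "supp (Pp n d p) \<subseteq> Ev n d ` supp p"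
  by (auto simp: supp_def Pp_def split: if_splits)

lemma eval_Pp: "eval (Suc n) (Pp n d p) X =
   (\<Sum>m\<in>supp p. p m * (\<Prod>i<n. X (Suc i) ^ m i) * (- X 0) ^ (d - deg n m))"
proof -
  have "eval (Suc n) (Pp n d p) X = (\<Sum>M\<in>Ev n d ` supp p. Pp n d p M * mon (Suc n) M X)"
    by (rule eval_superset[OF _ supp_Pp]) (use fin_p in auto)
  also have "\<dots> = (\<Sum>m\<in>supp p. Pp n d p (Ev n d m) * mon (Suc n) (Ev n d m) X)"
    by (subst sum.reindex) (auto intro!: inj_on_subset[OF Ev_inj])
  also have "\<dots> = (\<Sum>m\<in>supp p. p m * (\<Prod>i<n. X (Suc i) ^ m i) * (- X 0) ^ (d - deg n m))"
  proof (intro sum.cong refl)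
    fix m assume m: "m \<in> supp p"
    have i: "Ev n d m \<in> Ev n d ` supp p" using m by blast
    have "Pp n d p (Ev n d m) = p (tlv n (Ev n d m)) * (-1) ^ (Ev n d m 0)"
      unfolding Pp_def by (rule if_P[OF i])
    also have "\<dots> = p m * (-1) ^ (d - deg n m)"
      using tlv_Ev[OF m] by (simp add: Ev_def)
    finally have "Pp n d p (Ev n d m) = p m * (-1) ^ (d - deg n m)" .
    then show "Pp n d p (Ev n d m) * mon (Suc n) (Ev n d m) X = p m * (\<Prod>i<n. X (Suc i) ^ m i) * (- X 0) ^ (d - deg n m)"
      unfolding mon_Ev power_minus[of "X 0"] by (simp only: mult_ac)
  qed
  finally show ?thesis .
qed

lemma eval_Pd: "eval (Suc n) (Pd d) X = (- X 0) ^ d"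
proof -
  have "eval (Suc n) (Pd d) X = (\<Sum>M\<in>{e0 d}. Pd d M * mon (Suc n) M X)"
    by (rule eval_superset) (auto simp: supp_def Pd_def split: if_splits)
  also have "\<dots> = (-1) ^ d * X 0 ^ d"
    unfolding mon_def prod.lessThan_Suc_shift by (simp add: Pd_def e0_def)
  finally show ?thesis by (simp only: power_minus[of "X 0"])
qed

lemma fin_Pp: "finite (supp (Pp n d p))" using supp_Pp fin_p finite_subset by blast
lemma fin_Pd: "finite (supp (Pd d))"
  by (rule finite_subset[of _ "{e0 d}"]) (auto simp: supp_def Pd_def split: if_splits)

lemma eval_Pc: "eval (Suc n) (Pc n d p) X = induced n d p X"
  unfolding Pc_def eval_diff[OF fin_Pp fin_Pd] eval_Pp eval_Pd induced_def by simp

lemma supp_Pc: "supp (Pc n d p) \<subseteq> Ev n d ` supp p \<union> {e0 d}"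
  using supp_Pp by (auto simp: supp_def Pc_def Pd_def split: if_splits)

lemma fin_Pc: "finite (supp (Pc n d p))"
  using supp_Pc fin_p finite_subset by blast

lemma Pc_shape:
  assumes "Pc n d p M \<noteq> 0"
  shows "(\<forall>i>n. M i = 0) \<and> (\<Sum>i<Suc n. M i) = d"
proof -
  have "M \<in> Ev n d ` supp p \<union> {e0 d}" using assms supp_Pc by (auto simp: supp_def)
  then show ?thesis
  proof
    assume "M \<in> Ev n d ` supp p"
    then obtain m where m: "m \<in> supp p" "M = Ev n d m" by auto
    have "(\<Sum>i<Suc n. M i) = (d - deg n m) + deg n m"
      unfolding m(2) sum.lessThan_Suc_shift by (simp add: Ev_def deg_def)
    then show ?thesis using m deg_le[OF m(1)] by (auto simp: Ev_def supp_p_zero)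
  qed (auto simp: e0_def)
qed

lemma Pc_e0: "Pc n d p (e0 d) = (-1) ^ d * (p (\<lambda>_. 0) - 1)"
proof -
  have "e0 d = Ev n d (\<lambda>_. 0)" by (auto simp: e0_def Ev_def deg_def)
  have tl: "tlv n (e0 d) = (\<lambda>_. 0)" by (auto simp: tlv_def e0_def)
  show ?thesis
  proof (cases "(\<lambda>_. 0) \<in> supp p")
    case True
    then have "e0 d \<in> Ev n d ` supp p" using \<open>e0 d = Ev n d (\<lambda>_. 0)\<close> by auto
    then show ?thesis by (simp add: Pc_def Pp_def Pd_def tl algebra_simps) (simp add: e0_def)
  next
    case False
    then have "p (\<lambda>_. 0) = 0" by (simp add: supp_def)
    moreover have "e0 d \<notin> Ev n d ` supp p"
    proof
      assume "e0 d \<in> Ev n d ` supp p"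
      then obtain m where "m \<in> supp p" "e0 d = Ev n d m" by auto
      then have "m = tlv n (e0 d)" using tlv_Ev by simp
      then show False using False \<open>m \<in> supp p\<close> tl by simp
    qed
    ultimately show ?thesis by (simp add: Pc_def Pp_def Pd_def)
  qed
qed

lemma Pc_Ev:
  assumes m: "m \<in> supp p" and ne: "Ev n d m \<noteq> e0 d"
  shows "Pc n d p (Ev n d m) = p m * (-1) ^ (d - deg n m)"
proof -
  have i: "Ev n d m \<in> Ev n d ` supp p" using m by blast
  have "Pp n d p (Ev n d m) = p (tlv n (Ev n d m)) * (-1) ^ (Ev n d m 0)"
    unfolding Pp_def by (rule if_P[OF i])
  also have "\<dots> = p m * (-1) ^ (d - deg n m)"
    using tlv_Ev[OF m] by (simp add: Ev_def)
  finally show ?thesis using ne by (simp add: Pc_def Pd_def)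
qed

lemma vanish_nz:
  assumes "X 0 = - (\<Sum>i<n. X (Suc i))" "(\<Sum>i<n. X (Suc i)) \<noteq> 0"
  shows "induced n d p X = 0"
proof -
  define s where "s = (\<Sum>i<n. X (Suc i))"
  define x where "x = (\<lambda>i. X (Suc i) / s)"
  have "(\<Sum>i<n. x i) = 1" using assms by (simp add: x_def s_def sum_divide_distrib[symmetric])
  then have ev: "eval n p x = 1" by (rule p_ones)
  have "eval n p x = (\<Sum>m\<in>supp p. p m * (\<Prod>i<n. X (Suc i) ^ m i) / s ^ deg n m)"
    unfolding eval_def x_def
    by (simp add: power_divide prod_dividef deg_def power_sum)
  then have e1: "(\<Sum>m\<in>supp p. p m * (\<Prod>i<n. X (Suc i) ^ m i) / s ^ deg n m) = 1" using ev by simp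
  have "induced n d p X = (\<Sum>m\<in>supp p. p m * (\<Prod>i<n. X (Suc i) ^ m i) * s ^ (d - deg n m)) - s ^ d"
    unfolding induced_def using assms by (simp add: s_def)
  also have "\<dots> = s ^ d * (\<Sum>m\<in>supp p. p m * (\<Prod>i<n. X (Suc i) ^ m i) / s ^ deg n m) - s ^ d"
    unfolding sum_distrib_left
  proof (intro arg_cong2[where f="(-)"] sum.cong refl)
    fix m assume "m \<in> supp p"
    then have "s ^ (d - deg n m) = s ^ d / s ^ deg n m"
      using deg_le assms by (simp add: power_diff s_def)
    then show "p m * (\<Prod>i<n. X (Suc i) ^ m i) * s ^ (d - deg n m) = s ^ d * (p m * (\<Prod>i<n. X (Suc i) ^ m i) / s ^ deg n m)"
      by simp
  qed
  also have "\<dots> = 0" using e1 by simp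
  finally show ?thesis .
qed

lemma vanish:
  assumes "S n X = 0"
  shows "induced n d p X = 0"
proof (cases "(\<Sum>i<n. X (Suc i)) = 0")
  case False
  moreover have "X 0 = - (\<Sum>i<n. X (Suc i))"
    using assms unfolding S_def sum.lessThan_Suc_shift by simp
  ultimately show ?thesis by (intro vanish_nz)
next
  case True
  define v :: "nat \<Rightarrow> real" where "v = (\<lambda>i. if i = 0 then -1 else if i = 1 then 1 else 0)"
  define f where "f t = induced n d p (\<lambda>i. X i + t * v i)" for t
  have X0: "X 0 = 0" using assms True unfolding S_def sum.lessThan_Suc_shift by simp
  have sv: "(\<Sum>i<n. v (Suc i)) = 1"
  proof -
    have "(\<Sum>i<n. v (Suc i)) = (\<Sum>i<n. if i = 0 then 1 else 0)" by (intro sum.cong) (auto simp: v_def)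
    also have "\<dots> = 1" using n_pos by simp
    finally show ?thesis .
  qed
  have fz: "f t = 0" if "t \<noteq> 0" for t
    unfolding f_def
    by (rule vanish_nz) (use that True X0 sv in \<open>simp_all add: sum.distrib sum_distrib_left[symmetric] v_def\<close>)
  have "isCont f 0" unfolding f_def induced_def by (intro continuous_intros)
  then have l1: "(f \<longlongrightarrow> f 0) (at 0)" by (simp add: isCont_def)
  have "eventually (\<lambda>t. f t = 0) (at (0::real))"
    by (auto simp: eventually_at_filter fz)
  then have l2: "(f \<longlongrightarrow> 0) (at 0)" by (rule tendsto_eventually)
  have "f 0 = 0" using tendsto_unique[OF _ l1 l2] by simp
  then show ?thesis by (simp add: f_def)
qed

end


lemma sum_upd:
  fixes f :: "nat \<Rightarrow> nat"
  assumes "a < N"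
  shows "(\<Sum>i<N. (f(a := v)) i) + f a = (\<Sum>i<N. f i) + v"
proof -
  have "(\<Sum>i<N. (f(a := v)) i) = v + (\<Sum>i\<in>{..<N} - {a}. f i)"
    using assms by (simp add: sum.remove[of _ a])
  moreover have "(\<Sum>i<N. f i) = f a + (\<Sum>i\<in>{..<N} - {a}. f i)"
    using assms by (simp add: sum.remove[of _ a])
  ultimately show ?thesis by simp
qed

lemma is_poly_sh:
  assumes "is_poly N c" "a < N"
  shows "is_poly N (sh a c)"
proof -
  have "finite (supp (sh a c))" using assms finite_supp_sh by (auto simp: is_poly_def)
  moreover have "\<forall>M\<in>supp (sh a c). \<forall>i\<ge>N. M i = 0"
  proof (intro ballI allI impI)
    fix M i assume M: "M \<in> supp (sh a c)" and i: "N \<le> i"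
    then obtain M' where "M' \<in> supp c" "M = M'(a := M' a + 1)" using supp_sh by blast
    then show "M i = 0" using assms i by (auto simp: is_poly_def)
  qed
  ultimately show ?thesis by (simp add: is_poly_def)
qed

lemma is_poly_Smul:
  assumes "is_poly N c"
  shows "is_poly N (Smul N c)"
proof -
  have "finite (supp (Smul N c))" using assms finite_supp_Smul by (auto simp: is_poly_def)
  moreover have "\<forall>M\<in>supp (Smul N c). \<forall>i\<ge>N. M i = 0"
  proof (intro ballI allI impI)
    fix M i assume M: "M \<in> supp (Smul N c)" and i: "N \<le> i"
    then obtain a where "a < N" "M \<in> supp (sh a c)" using supp_Smul by blast
    then show "M i = 0" using is_poly_sh[OF assms \<open>a < N\<close>] i by (auto simp: is_poly_def)
  qed
  ultimately show ?thesis by (simp add: is_poly_def)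
qed

lemma is_poly_diff:
  assumes "is_poly N c" "is_poly N e"
  shows "is_poly N (\<lambda>M. c M - e M)"
proof -
  have "supp (\<lambda>M. c M - e M) \<subseteq> supp c \<union> supp e" by (auto simp: supp_def)
  then show ?thesis using assms unfolding is_poly_def by (auto intro: finite_subset)
qed

function qrec :: "nat \<Rightarrow> nat \<Rightarrow> ((nat \<Rightarrow> nat) \<Rightarrow> real) \<Rightarrow> (nat \<Rightarrow> nat) \<Rightarrow> real" where
  "qrec n d F M = (if M 0 < d then F (M(0 := Suc (M 0)))
     - (\<Sum>a<n. if 1 \<le> M (Suc a) then qrec n d F ((M(0 := Suc (M 0)))(Suc a := M (Suc a) - 1)) else 0)
     else 0)"
  by pat_completeness auto
termination by (relation "measure (\<lambda>(n,d,F,M). d - M 0)") auto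

declare qrec.simps[simp del]

lemma qrec_shape:
  shows "\<forall>M. F M \<noteq> 0 \<longrightarrow> (\<forall>i>n. M i = 0) \<and> (\<Sum>i<Suc n. M i) = d \<Longrightarrow>
    qrec n d F M \<noteq> 0 \<Longrightarrow> (\<forall>i>n. M i = 0) \<and> Suc (\<Sum>i<Suc n. M i) = d"
proof (induction n d F M rule: qrec.induct)
  case (1 n d F M)
  note F = "1.prems"(1)[rule_format]
  let ?M1 = "M(0 := Suc (M 0))"
  let ?M2 = "\<lambda>a. ?M1(Suc a := M (Suc a) - 1)"
  have lt: "M 0 < d" using "1.prems"(2) by (subst (asm) qrec.simps) (auto split: if_splits)
  have s1: "(\<Sum>i<Suc n. ?M1 i) = Suc (\<Sum>i<Suc n. M i)"
    using sum_upd[of 0 "Suc n" M "Suc (M 0)"] by simp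
  have "F ?M1 \<noteq> 0 \<or> (\<exists>a<n. 1 \<le> M (Suc a) \<and> qrec n d F (?M2 a) \<noteq> 0)"
  proof (rule ccontr)
    assume "\<not> ?thesis"
    then have "F ?M1 = 0" "\<forall>a<n. (if 1 \<le> M (Suc a) then qrec n d F (?M2 a) else 0) = 0" by auto
    then have "qrec n d F M = 0" by (subst qrec.simps) (simp add: lt)
    then show False using "1.prems"(2) by simp
  qed
  then show ?case
  proof
    assume "F ?M1 \<noteq> 0"
    from F[OF this] have "(\<forall>i>n. ?M1 i = 0) \<and> (\<Sum>i<Suc n. ?M1 i) = d" .
    then show ?thesis using s1 by auto
  next
    assume "\<exists>a<n. 1 \<le> M (Suc a) \<and> qrec n d F (?M2 a) \<noteq> 0"
    then obtain a where a: "a < n" "1 \<le> M (Suc a)" "qrec n d F (?M2 a) \<noteq> 0" by blast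
    have IH: "(\<forall>i>n. ?M2 a i = 0) \<and> Suc (\<Sum>i<Suc n. ?M2 a i) = d"
      using "1.IH"[of a] a lt "1.prems"(1) by blast
    have s2: "(\<Sum>i<Suc n. ?M2 a i) + M (Suc a) = (\<Sum>i<Suc n. ?M1 i) + (M (Suc a) - 1)"
      using sum_upd[of "Suc a" "Suc n" ?M1 "M (Suc a) - 1"] a by simp
    have "(\<forall>i>n. M i = 0)"
    proof (intro allI impI)
      fix i assume "n < i"
      then show "M i = 0" using IH a by (auto split: if_splits dest!: spec[of _ i])
    qed
    moreover have "(\<Sum>i<Suc n. ?M2 a i) = (\<Sum>i<Suc n. M i)" using s1 s2 a by linarith
    ultimately show ?thesis using IH by simp
  qed
qed

lemma qrec_big: "d \<le> M 0 \<Longrightarrow> qrec n d F M = 0"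
  by (subst qrec.simps) simp

context hyp
begin

definition q0 :: "(nat \<Rightarrow> nat) \<Rightarrow> real" where "q0 = qrec n d (Pc n d p)"

lemma Pc_shape': "\<forall>M. Pc n d p M \<noteq> 0 \<longrightarrow> (\<forall>i>n. M i = 0) \<and> (\<Sum>i<Suc n. M i) = d"
  using Pc_shape by blast

lemma q0_shape: "q0 M \<noteq> 0 \<Longrightarrow> (\<forall>i>n. M i = 0) \<and> Suc (\<Sum>i<Suc n. M i) = d"
  unfolding q0_def by (rule qrec_shape[OF Pc_shape'])

lemma is_poly_Pc: "is_poly (Suc n) (Pc n d p)"
  unfolding is_poly_def using fin_Pc Pc_shape by (auto simp: supp_def)

lemma q0_poly: "is_poly (Suc n) q0"
proof -
  have "supp q0 \<subseteq> {M. \<forall>x. (x \<in> {..n} \<longrightarrow> M x \<in> {..d}) \<and> (x \<notin> {..n} \<longrightarrow> M x = 0)}"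
  proof (intro subsetI CollectI allI conjI impI)
    fix M x assume M: "M \<in> supp q0"
    then have sh: "(\<forall>i>n. M i = 0) \<and> Suc (\<Sum>i<Suc n. M i) = d" using q0_shape by (simp add: supp_def)
    { assume "x \<in> {..n}"
      then have "M x \<le> (\<Sum>i<Suc n. M i)" by (intro member_le_sum) auto
      then show "M x \<in> {..d}" using sh by auto }
    { assume "x \<notin> {..n}" then show "M x = 0" using sh by auto }
  qed
  then have "finite (supp q0)" by (rule finite_subset) (intro finite_set_of_finite_funs; simp)
  moreover have "\<forall>M\<in>supp q0. \<forall>i\<ge>Suc n. M i = 0" using q0_shape by (auto simp: supp_def)
  ultimately show ?thesis by (simp add: is_poly_def)
qed

lemma Smul_q0_pos:
  assumes M1: "1 \<le> M 0"
  shows "Smul (Suc n) q0 M = Pc n d p M"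
proof -
  let ?M' = "M(0 := M 0 - 1)"
  have S: "Smul (Suc n) q0 M = q0 ?M' + (\<Sum>a<n. if 1 \<le> M (Suc a) then q0 (M(Suc a := M (Suc a) - 1)) else 0)"
    unfolding Smul_def sum.lessThan_Suc_shift using M1 by (simp add: sh_def)
  show ?thesis
  proof (cases "M 0 \<le> d")
    case True
    have e: "?M'(0 := Suc (?M' 0)) = M" using M1 by auto
    have "q0 ?M' = Pc n d p M - (\<Sum>a<n. if 1 \<le> M (Suc a) then q0 (M(Suc a := M (Suc a) - 1)) else 0)"
    proof -
      have e2: "(?M'(0 := Suc (?M' 0)))(Suc a := ?M' (Suc a) - 1) = M(Suc a := M (Suc a) - 1)" for a
        using M1 by (auto simp: fun_eq_iff)
      have "q0 ?M' = Pc n d p (?M'(0 := Suc (?M' 0))) - (\<Sum>a<n. if 1 \<le> ?M' (Suc a) then q0 ((?M'(0 := Suc (?M' 0)))(Suc a := ?M' (Suc a) - 1)) else 0)"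
        unfolding q0_def using True M1 by (subst qrec.simps) simp
      also have "\<dots> = Pc n d p M - (\<Sum>a<n. if 1 \<le> M (Suc a) then q0 (M(Suc a := M (Suc a) - 1)) else 0)"
        unfolding e2 e by (intro arg_cong2[where f="(-)"] refl sum.cong) auto
      finally show ?thesis .
    qed
    then show ?thesis using S by simp
  next
    case False
    have z1: "q0 ?M' = 0" unfolding q0_def using False by (intro qrec_big) simp
    have z2: "(\<Sum>a<n. if 1 \<le> M (Suc a) then q0 (M(Suc a := M (Suc a) - 1)) else 0) = 0"
      unfolding q0_def using False by (intro sum.neutral) (auto intro!: qrec_big)
    have "Pc n d p M = 0"
    proof (rule ccontr)
      assume "Pc n d p M \<noteq> 0"
      then have "(\<Sum>i<Suc n. M i) = d" using Pc_shape by blast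
      moreover have "M 0 \<le> (\<Sum>i<Suc n. M i)" by (intro member_le_sum) auto
      ultimately show False using False by simp
    qed
    then show ?thesis using S z1 z2 by simp
  qed
qed

lemma eval_diff_quot:
  assumes "is_poly (Suc n) q"
  shows "eval (Suc n) (\<lambda>M. Pc n d p M - Smul (Suc n) q M) X = induced n d p X - S n X * eval (Suc n) q X"
proof -
  have fq: "finite (supp q)" using assms by (simp add: is_poly_def)
  show ?thesis
    unfolding eval_diff[OF fin_Pc finite_supp_Smul[OF fq]] eval_Pc eval_Smul[OF fq] S_def ..
qed

lemma Smul_q0: "Smul (Suc n) q0 M = Pc n d p M"
proof -
  define R where "R M = Pc n d p M - Smul (Suc n) q0 M" for M
  have ipR: "is_poly (Suc n) R" unfolding R_def
    by (intro is_poly_diff is_poly_Pc is_poly_Smul q0_poly)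
  have R0: "M 0 = 0" if "M \<in> supp R" for M
    using that Smul_q0_pos[of M] by (cases "M 0") (auto simp: supp_def R_def)
  have ind: "eval (Suc n) R X = eval (Suc n) R (X(0 := w))" for X w
    unfolding eval_def
  proof (intro sum.cong refl)
    fix M assume "M \<in> supp R"
    then have "M 0 = 0" by (rule R0)
    then show "R M * (\<Prod>i<Suc n. X i ^ M i) = R M * (\<Prod>i<Suc n. (X(0 := w)) i ^ M i)"
      unfolding prod.lessThan_Suc_shift by simp
  qed
  have "eval (Suc n) R X = 0" for X
  proof -
    let ?X = "X(0 := - (\<Sum>i<n. X (Suc i)))"
    have S0: "S n ?X = 0" unfolding S_def sum.lessThan_Suc_shift by simp
    have "eval (Suc n) R ?X = induced n d p ?X - S n ?X * eval (Suc n) q0 ?X"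
      unfolding R_def by (rule eval_diff_quot[OF q0_poly])
    also have "\<dots> = 0" using S0 vanish[OF S0] by simp
    finally show ?thesis using ind by metis
  qed
  then have "R M = 0" by (intro IDT[OF ipR])
  then show ?thesis by (simp add: R_def)
qed

lemma exists_q: "is_quotient n d p q0"
proof -
  have "induced n d p X = S n X * eval (Suc n) q0 X" for X
  proof -
    have "eval (Suc n) (\<lambda>M. Pc n d p M - Smul (Suc n) q0 M) X = 0"
      by (simp add: Smul_q0 eval_def supp_def)
    then show ?thesis using eval_diff_quot[OF q0_poly] by simp
  qed
  then show ?thesis using q0_poly by (simp add: is_quotient_def)
qed

lemma Smul_q:
  assumes "is_quotient n d p q"
  shows "Smul (Suc n) q M = Pc n d p M"
proof -
  have ip: "is_poly (Suc n) q" using assms by (simp add: is_quotient_def)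
  have ev: "eval (Suc n) (\<lambda>M. Pc n d p M - Smul (Suc n) q M) X = 0" for X
    using eval_diff_quot[OF ip] assms by (simp add: is_quotient_def)
  have "Pc n d p M - Smul (Suc n) q M = 0"
    using IDT[OF is_poly_diff[OF is_poly_Pc is_poly_Smul[OF ip]] ev] by simp
  then show ?thesis by simp
qed

end



definition enc :: "nat \<Rightarrow> nat \<Rightarrow> (nat \<Rightarrow> int) \<Rightarrow> (nat \<Rightarrow> nat)" where
  "enc n d m = (\<lambda>j. if j = 0 then nat (int d - 1 - absZ n m) else if j \<le> n then nat (m (j - 1)) else 0)"
definition dec :: "nat \<Rightarrow> (nat \<Rightarrow> nat) \<Rightarrow> (nat \<Rightarrow> int)" where
  "dec n M = (\<lambda>i. if i < n then int (M (Suc i)) else 0)"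
definition valid :: "nat \<Rightarrow> nat \<Rightarrow> (nat \<Rightarrow> int) \<Rightarrow> bool" where
  "valid n d m \<longleftrightarrow> (\<forall>i<n. m i \<ge> 0) \<and> int d - 1 - absZ n m \<ge> 0"
definition lvl :: "nat \<Rightarrow> nat \<Rightarrow> (nat \<Rightarrow> nat) \<Rightarrow> bool" where
  "lvl n d M \<longleftrightarrow> (\<forall>i>n. M i = 0) \<and> Suc (\<Sum>i<Suc n. M i) = d"

lemma newton_coeff_alt: "newton_coeff n d q m = (if valid n d m then q (enc n d m) else 0)"
  unfolding newton_coeff_def valid_def enc_def by simp

lemma K_iff: "m \<in> newton_support n d q \<longleftrightarrow> m \<in> Zn n \<and> valid n d m \<and> q (enc n d m) \<noteq> 0"
  unfolding newton_support_def newton_diagram_def newton_coeff_alt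
  by (auto split: if_splits)

lemma dec_enc:
  assumes "m \<in> Zn n" "valid n d m"
  shows "dec n (enc n d m) = m"
  using assms by (auto simp: fun_eq_iff dec_def enc_def Zn_def valid_def)

lemma sum_Suc_split: "(\<Sum>i<Suc n. M i) = M 0 + (\<Sum>i<n. M (Suc i))"
  by (rule sum.lessThan_Suc_shift)

lemma absZ_dec: "absZ n (dec n M) = int (\<Sum>i<n. M (Suc i))"
  unfolding absZ_def dec_def by simp

lemma enc_dec:
  assumes "lvl n d M"
  shows "enc n d (dec n M) = M" and "dec n M \<in> Zn n" and "valid n d (dec n M)"
proof -
  have s: "Suc (M 0 + (\<Sum>i<n. M (Suc i))) = d" using assms unfolding lvl_def sum_Suc_split by simp
  show "enc n d (dec n M) = M"
  proof
    fix j show "enc n d (dec n M) j = M j"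
      using s assms unfolding enc_def absZ_dec lvl_def
      by (cases j) (auto simp: dec_def)
  qed
  show "dec n M \<in> Zn n" by (simp add: Zn_def dec_def)
  show "valid n d (dec n M)" using s unfolding valid_def absZ_dec by (auto simp: dec_def)
qed

lemma enc_lvl:
  assumes "m \<in> Zn n" "valid n d m"
  shows "lvl n d (enc n d m)"
proof -
  have nn: "\<And>i. i < n \<Longrightarrow> m i \<ge> 0" "int d - 1 - absZ n m \<ge> 0" using assms by (auto simp: valid_def)
  have "(\<Sum>i<n. enc n d m (Suc i)) = (\<Sum>i<n. nat (m i))" by (intro sum.cong) (auto simp: enc_def)
  moreover have "int (\<Sum>i<n. nat (m i)) = absZ n m" using nn(1) by (simp add: absZ_def)
  ultimately have "int (\<Sum>i<n. enc n d m (Suc i)) = absZ n m" by simp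
  moreover have "int (enc n d m 0) = int d - 1 - absZ n m" using nn(2) by (simp add: enc_def)
  ultimately have "int (Suc (\<Sum>i<Suc n. enc n d m i)) = int d" unfolding sum_Suc_split by simp
  then have "Suc (\<Sum>i<Suc n. enc n d m i) = d" by (simp only: of_nat_eq_iff)
  moreover have "\<forall>i>n. enc n d m i = 0" by (simp add: enc_def)
  ultimately show ?thesis unfolding lvl_def by blast
qed

lemma lvl_down:
  assumes "\<forall>i>n. M i = 0" "(\<Sum>i<Suc n. M i) = d" "a < Suc n" "1 \<le> M a"
  shows "lvl n d (M(a := M a - 1))"
proof -
  have "(\<Sum>i<Suc n. (M(a := M a - 1)) i) + M a = (\<Sum>i<Suc n. M i) + (M a - 1)"
    using sum_upd[OF assms(3)] by blast
  then show ?thesis using assms unfolding lvl_def by auto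
qed

lemma lvl_up:
  assumes "lvl n d M" "a < Suc n"
  shows "\<forall>i>n. (M(a := Suc (M a))) i = 0" "(\<Sum>i<Suc n. (M(a := Suc (M a))) i) = d"
proof -
  show "\<forall>i>n. (M(a := Suc (M a))) i = 0" using assms by (auto simp: lvl_def)
  have "(\<Sum>i<Suc n. (M(a := Suc (M a))) i) + M a = (\<Sum>i<Suc n. M i) + Suc (M a)"
    using sum_upd[OF assms(2)] by blast
  then show "(\<Sum>i<Suc n. (M(a := Suc (M a))) i) = d" using assms by (auto simp: lvl_def)
qed

lemma adjacent_sym: "adjacent n x y \<Longrightarrow> adjacent n y x"
proof -
  assume h: "adjacent n x y"
  then have ne: "y \<noteq> x" by (auto simp: adjacent_def)
  from h consider
      (A) j where "j < n" "\<forall>i. x i - y i = (if i = j then 1 else 0)"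
    | (B) j where "j < n" "\<forall>i. x i - y i = (if i = j then -1 else 0)"
    | (C) j k where "j < n" "k < n" "j \<noteq> k" "\<forall>i. x i - y i = (if i = j then 1 else 0) - (if i = k then 1 else 0)"
    unfolding adjacent_def by blast
  then show ?thesis
  proof cases
    case (A j)
    have "\<forall>i. y i - x i = (if i = j then -1 else 0)"
    proof
      fix i show "y i - x i = (if i = j then -1 else 0)" using A(2)[rule_format, of i] by (cases "i = j") auto
    qed
    then show ?thesis using A ne unfolding adjacent_def by blast
  next
    case (B j)
    have "\<forall>i. y i - x i = (if i = j then 1 else 0)"
    proof
      fix i show "y i - x i = (if i = j then 1 else 0)" using B(2)[rule_format, of i] by (cases "i = j") auto
    qed
    then show ?thesis using B ne unfolding adjacent_def by blast
  next
    case (C j k)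
    have "\<forall>i. y i - x i = (if i = k then 1 else 0) - (if i = j then 1 else 0)"
    proof
      fix i show "y i - x i = (if i = k then 1 else 0) - (if i = j then 1 else 0)"
        using C(4)[rule_format, of i] by (cases "i = j"; cases "i = k") auto
    qed
    then show ?thesis using C ne unfolding adjacent_def by blast
  qed
qed

lemma adj_dec:
  assumes "a < Suc n" "b < Suc n" "a \<noteq> b" "1 \<le> M a" "1 \<le> M b"
  shows "adjacent n (dec n (M(b := M b - 1))) (dec n (M(a := M a - 1)))"
proof -
  let ?x = "dec n (M(b := M b - 1))" and ?y = "dec n (M(a := M a - 1))"
  have diff: "?x i - ?y i = (if Suc i = a then 1 else 0) - (if Suc i = b then 1 else 0)" for i
    using assms by (auto simp: dec_def of_nat_diff)
  show ?thesis
  proof (cases "a = 0")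
    case True
    then obtain j where j: "b = Suc j" using assms by (metis not0_implies_Suc)
    have "j < n" using j assms by simp
    moreover have f: "\<forall>i. ?x i - ?y i = (if i = j then -1 else 0)" using diff j True by simp
    moreover have "?x \<noteq> ?y" using f[rule_format, of j] by auto
    ultimately show ?thesis unfolding adjacent_def by blast
  next
    case False
    then obtain j where j: "a = Suc j" by (metis not0_implies_Suc)
    have jn: "j < n" using j assms by simp
    show ?thesis
    proof (cases "b = 0")
      case True
      have f: "\<forall>i. ?x i - ?y i = (if i = j then 1 else 0)" using diff j True by simp
      moreover have "?x \<noteq> ?y" using f[rule_format, of j] by auto
      ultimately show ?thesis using jn unfolding adjacent_def by blast
    next
      case False
      then obtain k where k: "b = Suc k" by (metis not0_implies_Suc)
      have "k < n" "j \<noteq> k" using k j assms by auto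
      moreover have f: "\<forall>i. ?x i - ?y i = (if i = j then 1 else 0) - (if i = k then 1 else 0)"
        using diff j k by simp
      moreover have "?x \<noteq> ?y" using f[rule_format, of j] \<open>j \<noteq> k\<close> by auto
      ultimately show ?thesis using jn unfolding adjacent_def by blast
    qed
  qed
qed



lemma Smul_split: "Smul (Suc n) c M = sh 0 c M + (\<Sum>a<n. sh (Suc a) c M)"
  unfolding Smul_def by (rule sum.lessThan_Suc_shift)

locale quot = hyp +
  fixes q :: "(nat \<Rightarrow> nat) \<Rightarrow> real"
  assumes Q: "is_quotient n d p q"
begin

abbreviation "KK \<equiv> newton_support n d q"

lemma SQ: "Smul (Suc n) q M = Pc n d p M" by (rule Smul_q[OF Q])
lemma ipq: "is_poly (Suc n) q" using Q by (simp add: is_quotient_def)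
lemma finq: "finite (supp q)" using ipq by (simp add: is_poly_def)

lemma q_lvl_K: "lvl n d M \<Longrightarrow> q M \<noteq> 0 \<Longrightarrow> dec n M \<in> KK"
  using enc_dec[of n d M] by (simp add: K_iff)

lemma finK: "finite KK"
proof -
  have "KK \<subseteq> dec n ` supp q"
  proof
    fix m assume "m \<in> KK"
    then have h: "m \<in> Zn n" "valid n d m" "q (enc n d m) \<noteq> 0" by (auto simp: K_iff)
    then have "m = dec n (enc n d m)" using dec_enc by simp
    then show "m \<in> dec n ` supp q" using h(3) by (auto simp: supp_def)
  qed
  then show ?thesis using finq finite_subset by blast
qed

lemma K_bounds: "m \<in> KK \<Longrightarrow> absZ n m \<le> int d - 1 \<and> (\<forall>i<n. 0 \<le> m i)"
  by (auto simp: K_iff valid_def)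

lemma e0_lvl: "lvl n d ((e0 d)(0 := d - 1))" and e0_dec: "dec n ((e0 d)(0 := d - 1)) = (\<lambda>i. 0)"
proof -
  have "(\<Sum>i<Suc n. ((e0 d)(0 := d - 1)) i) = d - 1"
    unfolding sum_Suc_split by (simp add: e0_def)
  then show "lvl n d ((e0 d)(0 := d - 1))" using d1 by (auto simp: lvl_def e0_def)
  show "dec n ((e0 d)(0 := d - 1)) = (\<lambda>i. 0)" by (auto simp: dec_def e0_def fun_eq_iff)
qed

lemma Smul_e0: "Smul (Suc n) c (e0 d) = c ((e0 d)(0 := d - 1))"
  unfolding Smul_split using d1 by (simp add: sh_def e0_def)

lemma zero_in_K: "(\<lambda>i. 0) \<in> KK"
proof -
  have "Pc n d p (e0 d) \<noteq> 0" using Pc_e0 p0_ne1 by simp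
  then have "q ((e0 d)(0 := d - 1)) \<noteq> 0" using SQ Smul_e0 by metis
  then show ?thesis using q_lvl_K[OF e0_lvl] e0_dec by simp
qed

lemma top_in_K: "\<exists>m\<in>KK. absZ n m = int d - 1"
proof -
  obtain m where m: "m \<in> supp p" "deg n m = d" using deg_top by blast
  let ?M = "Ev n d m"
  have M0: "?M 0 = 0" using m by (simp add: Ev_def)
  have ne: "?M \<noteq> e0 d" using M0 d1 by (auto simp: e0_def fun_eq_iff dest!: spec[of _ 0])
  have "Pc n d p ?M = p m" using Pc_Ev[OF m(1) ne] m by simp
  then have Pne: "Pc n d p ?M \<noteq> 0" using m by (simp add: supp_def)
  then have top: "\<forall>i>n. ?M i = 0" "(\<Sum>i<Suc n. ?M i) = d" using Pc_shape by blast+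
  have "Smul (Suc n) q ?M \<noteq> 0" using SQ Pne by simp
  then obtain a where a: "a < Suc n" "sh a q ?M \<noteq> 0" unfolding Smul_def
    by (metis (no_types, lifting) lessThan_iff sum.neutral)
  then have a1: "1 \<le> ?M a" and qa: "q (?M(a := ?M a - 1)) \<noteq> 0" by (auto simp: sh_def split: if_splits)
  have "a \<noteq> 0"
  proof
    assume "a = 0" then show False using a1 M0 by simp
  qed
  have L: "lvl n d (?M(a := ?M a - 1))" by (rule lvl_down[OF top a(1) a1])
  have "dec n (?M(a := ?M a - 1)) \<in> KK" by (rule q_lvl_K[OF L qa])
  moreover have "absZ n (dec n (?M(a := ?M a - 1))) = int d - 1"
  proof -
    have "Suc (\<Sum>i<Suc n. (?M(a := ?M a - 1)) i) = d" using L by (simp add: lvl_def)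
    then have "Suc ((?M(a := ?M a - 1)) 0 + (\<Sum>i<n. (?M(a := ?M a - 1)) (Suc i))) = d"
      unfolding sum_Suc_split .
    then have "Suc (\<Sum>i<n. (?M(a := ?M a - 1)) (Suc i)) = d" using M0 \<open>a \<noteq> 0\<close> by simp
    then show ?thesis unfolding absZ_dec by linarith
  qed
  ultimately show ?thesis by blast
qed

lemma size_K: "lattice_size n KK = int d"
proof -
  have mx: "Max (absZ n ` KK) = int d - 1"
  proof (rule Max_eqI)
    show "finite (absZ n ` KK)" using finK by simp
    show "y \<le> int d - 1" if "y \<in> absZ n ` KK" for y using that K_bounds by auto
    show "int d - 1 \<in> absZ n ` KK" using top_in_K by force
  qed
  have mn: "Min ((\<lambda>m. m j) ` KK) = 0" if "j < n" for j
  proof (rule Min_eqI)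
    show "finite ((\<lambda>m. m j) ` KK)" using finK by simp
    show "0 \<le> y" if "y \<in> (\<lambda>m. m j) ` KK" for y using that K_bounds \<open>j < n\<close> by auto
    show "0 \<in> (\<lambda>m. m j) ` KK" using zero_in_K by force
  qed
  have "(\<Sum>j<n. Min ((\<lambda>m. m j) ` KK)) = 0" using mn by simp
  then show ?thesis unfolding lattice_size_def mx by simp
qed

end



context quot
begin

abbreviation "Rel \<equiv> (\<lambda>x y. x \<in> KK \<and> y \<in> KK \<and> adjacent n x y)"

lemma Rel_sym: "Rel\<^sup>*\<^sup>* x y \<Longrightarrow> Rel\<^sup>*\<^sup>* y x"
proof (induction rule: rtranclp_induct)
  case base then show ?case by simp
next
  case (step y z)
  then have "Rel z y" using adjacent_sym by blast
  then show ?case using step(3) by (rule converse_rtranclp_into_rtranclp)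
qed

lemma all_reach: "\<forall>m\<in>KK. Rel\<^sup>*\<^sup>* (\<lambda>i. 0) m"
proof (rule ccontr)
  assume H0: "\<not> (\<forall>m\<in>KK. Rel\<^sup>*\<^sup>* (\<lambda>i. 0) m)"
  define K2 where "K2 = {m \<in> KK. \<not> Rel\<^sup>*\<^sup>* (\<lambda>i. 0) m}"
  have K2ne: "K2 \<noteq> {}" using H0 by (auto simp: K2_def)
  define q2 where "q2 M = (if lvl n d M \<and> dec n M \<in> K2 then q M else 0)" for M
  have fin2: "finite (supp q2)"
    by (rule finite_subset[OF _ finq]) (auto simp: supp_def q2_def)
  have key: "Smul (Suc n) q2 M = Pc n d p M" if nz: "Smul (Suc n) q2 M \<noteq> 0" for M
  proof -
    obtain a where a: "a < Suc n" "sh a q2 M \<noteq> 0" using nz unfolding Smul_def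
      by (metis (no_types, lifting) lessThan_iff sum.neutral)
    let ?Ma = "M(a := M a - 1)"
    have a1: "1 \<le> M a" and q2a: "q2 ?Ma \<noteq> 0" using a by (auto simp: sh_def split: if_splits)
    then have La: "lvl n d ?Ma" and Ka: "dec n ?Ma \<in> K2" and qa: "q ?Ma \<noteq> 0"
      by (auto simp: q2_def split: if_splits)
    have MM: "?Ma(a := Suc (?Ma a)) = M" using a1 by (auto simp: fun_eq_iff)
    have top: "\<forall>i>n. M i = 0" "(\<Sum>i<Suc n. M i) = d"
      using lvl_up[OF La a(1)] unfolding MM by simp_all
    have "sh b q2 M = sh b q M" if b: "b < Suc n" for b
    proof (cases "1 \<le> M b")
      case False then show ?thesis by (simp add: sh_def)
    next
      case True
      let ?Mb = "M(b := M b - 1)"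
      have Lb: "lvl n d ?Mb" by (rule lvl_down[OF top b True])
      show ?thesis
      proof (cases "q ?Mb = 0")
        case True then show ?thesis by (simp add: sh_def q2_def)
      next
        case False
        then have Kb: "dec n ?Mb \<in> KK" by (rule q_lvl_K[OF Lb])
        have "dec n ?Mb \<in> K2"
        proof (cases "b = a")
          case True then show ?thesis using Ka by simp
        next
          case False
          have adj: "adjacent n (dec n ?Mb) (dec n ?Ma)" by (rule adj_dec[OF a(1) b False[symmetric] a1 True])
          show ?thesis
          proof (rule ccontr)
            assume "dec n ?Mb \<notin> K2"
            then have "Rel\<^sup>*\<^sup>* (\<lambda>i. 0) (dec n ?Mb)" using Kb by (auto simp: K2_def)
            moreover have "Rel (dec n ?Mb) (dec n ?Ma)" using adj Kb Ka by (auto simp: K2_def)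
            ultimately have "Rel\<^sup>*\<^sup>* (\<lambda>i. 0) (dec n ?Ma)" by (rule rtranclp.rtrancl_into_rtrancl[of Rel])
            then show False using Ka by (auto simp: K2_def)
          qed
        qed
        then show ?thesis using Lb True by (simp add: sh_def q2_def)
      qed
    qed
    then have "Smul (Suc n) q2 M = Smul (Suc n) q M" unfolding Smul_def by (intro sum.cong) auto
    then show ?thesis using SQ by simp
  qed
  have e0z: "Smul (Suc n) q2 (e0 d) = 0"
  proof -
    have "dec n ((e0 d)(0 := d - 1)) \<notin> K2" using e0_dec by (simp add: K2_def)
    then show ?thesis unfolding Smul_e0 by (simp add: q2_def)
  qed
  have allz: "Smul (Suc n) q2 M = 0" for M
  proof (rule ccontr)
    assume Mnz: "Smul (Suc n) q2 M \<noteq> 0"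
    define Xs :: "nat \<Rightarrow> real" where "Xs = (\<lambda>i. if i = 0 then - real n else 1)"
    have "(\<Sum>a<Suc n. Xs a) = 0" unfolding sum_Suc_split by (simp add: Xs_def)
    then have ev0: "eval (Suc n) (Smul (Suc n) q2) Xs = 0" using eval_Smul[OF fin2] by simp
    have pos: "Smul (Suc n) q2 M' * (\<Prod>i<Suc n. Xs i ^ M' i) > 0" if M': "M' \<in> supp (Smul (Suc n) q2)" for M'
    proof -
      have nz': "Smul (Suc n) q2 M' \<noteq> 0" using M' by (simp add: supp_def)
      then have PM: "Smul (Suc n) q2 M' = Pc n d p M'" by (rule key)
      have "M' \<noteq> e0 d" using nz' e0z by auto
      moreover have "M' \<in> supp (Pc n d p)" using PM nz' by (simp add: supp_def)
      ultimately have "M' \<in> Ev n d ` supp p" using supp_Pc by auto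
      then obtain m where m: "m \<in> supp p" "M' = Ev n d m" by auto
      have pm: "p m > 0" using m p_nonneg[of m] by (simp add: supp_def order_le_less)
      have PcM: "Pc n d p M' = p m * (-1) ^ (d - deg n m)"
        using Pc_Ev[OF m(1)] m \<open>M' \<noteq> e0 d\<close> by simp
      have "(\<Prod>i<Suc n. Xs i ^ M' i) = (- real n) ^ (d - deg n m)"
        unfolding prod.lessThan_Suc_shift using m by (simp add: Xs_def Ev_def)
      then have "Smul (Suc n) q2 M' * (\<Prod>i<Suc n. Xs i ^ M' i) = p m * ((-1) ^ (d - deg n m) * (- real n) ^ (d - deg n m))"
        using PM PcM by simp
      also have "(-1) ^ (d - deg n m) * (- real n) ^ (d - deg n m) = real n ^ (d - deg n m)"
        by (simp add: power_mult_distrib[symmetric])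
      then have "p m * ((-1) ^ (d - deg n m) * (- real n) ^ (d - deg n m)) = p m * real n ^ (d - deg n m)" by simp
      also have "\<dots> > 0" using pm n_pos by simp
      finally show ?thesis .
    qed
    have "M \<in> supp (Smul (Suc n) q2)" using Mnz by (simp add: supp_def)
    then have "(\<Sum>M'\<in>supp (Smul (Suc n) q2). Smul (Suc n) q2 M' * (\<Prod>i<Suc n. Xs i ^ M' i)) > 0"
      using finite_supp_Smul[OF fin2] pos by (intro sum_pos) auto
    then show False using ev0 by (simp add: eval_def)
  qed
  have q2z: "q2 M = 0" for M
  proof (rule ccontr)
    assume "q2 M \<noteq> 0"
    then have ne: "supp q2 \<noteq> {}" by (auto simp: supp_def)
    define mx where "mx = Max ((\<lambda>M. M 0) ` supp q2)"
    have "mx \<in> (\<lambda>M. M 0) ` supp q2" unfolding mx_def using fin2 ne by (intro Max_in) auto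
    then obtain M0 where M0: "M0 \<in> supp q2" "M0 0 = mx" by auto
    have le: "M' 0 \<le> mx" if "M' \<in> supp q2" for M' unfolding mx_def using fin2 that by (intro Max_ge) auto
    let ?U = "M0(0 := Suc (M0 0))"
    have "sh (Suc a) q2 ?U = 0" for a
    proof -
      have "(?U(Suc a := ?U (Suc a) - 1)) \<notin> supp q2"
        using le[of "?U(Suc a := ?U (Suc a) - 1)"] M0 by auto
      then show ?thesis by (simp add: sh_def supp_def)
    qed
    moreover have "sh 0 q2 ?U = q2 M0" by (simp add: sh_def)
    ultimately have "Smul (Suc n) q2 ?U = q2 M0" unfolding Smul_split by simp
    then show False using allz M0(1) by (simp add: supp_def)
  qed
  obtain m where m: "m \<in> K2" using K2ne by blast
  then have mK: "m \<in> Zn n" "valid n d m" "q (enc n d m) \<noteq> 0" by (auto simp: K2_def K_iff)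
  have "q2 (enc n d m) = q (enc n d m)"
    using enc_lvl[OF mK(1,2)] dec_enc[OF mK(1,2)] m by (simp add: q2_def)
  then show False using q2z mK(3) by simp
qed

lemma connected_K: "lattice_connected n KK"
  unfolding lattice_connected_def
proof (intro ballI)
  fix a b assume "a \<in> KK" "b \<in> KK"
  then have "Rel\<^sup>*\<^sup>* (\<lambda>i. 0) a" "Rel\<^sup>*\<^sup>* (\<lambda>i. 0) b" using all_reach by auto
  then show "Rel\<^sup>*\<^sup>* a b" using Rel_sym by (blast intro: rtranclp_trans)
qed

end


theorem mainTheorem13:
  fixes n d :: nat and p :: "(nat \<Rightarrow> nat) \<Rightarrow> real"
  assumes "d \<ge> 1" and "H n d p"
  shows "(\<exists>q. is_quotient n d p q) \<and>
         (\<forall>q. is_quotient n d p q \<longrightarrow>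
            lattice_connected n (newton_support n d q)
            \<and> (\<lambda>i. 0) \<in> newton_support n d q
            \<and> lattice_size n (newton_support n d q) = int d)"
proof -
  interpret hyp n d p using assms by unfold_locales
  have "is_quotient n d p q0" by (rule exists_q)
  moreover have "\<forall>q. is_quotient n d p q \<longrightarrow>
            lattice_connected n (newton_support n d q)
            \<and> (\<lambda>i. 0) \<in> newton_support n d q
            \<and> lattice_size n (newton_support n d q) = int d"
  proof (intro allI impI)
    fix q assume Qq: "is_quotient n d p q"
    interpret quot n d p q using assms Qq by unfold_locales
    show "lattice_connected n (newton_support n d q)
            \<and> (\<lambda>i. 0) \<in> newton_support n d q
            \<and> lattice_size n (newton_support n d q) = int d"
      using connected_K zero_in_K size_K by blast
  qed
  ultimately show ?thesis by blast
qed

end
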